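(* Let $a$ and $b$ be relatively prime integers with $1<a<b$, let $(u,v)$ be the definitely least solution of $ax+by=1$, and let $S=\langle a,b\rangle$. Then every nonempty set $I_{i,a}(S)$, $i\in\{1,\dots,a-1\}$, has exactly $|u|$ elements.
   Context: $\langle a,b\rangle=\{\lambda_1a+\lambda_2b:\lambda_1,\lambda_2\in\mathbb{N}\}$. $I(S)$ is the set of isolated gaps of $S$ ($x\in\mathbb{N}\setminus S$ with $x-1,x+1\in S$), and $I_{i,a}(S)=\{s\in I(S):s\equiv i\pmod a\}$. The definitely least solution $(u,v)$ of $ax+by=1$ is the unique integer solution with $|u|,|v|$ minimal; equivalently the one with $|u|\le b/2$, $|v|\le a/2$. *)

theory Defs
  imports Main
begin

definition semigroup2 :: "nat \<Rightarrow> nat \<Rightarrow> nat set" where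
  "semigroup2 a b = {l1 * a + l2 * b | l1 l2. True}"

definition isolated_gaps :: "nat set \<Rightarrow> nat set" where
  "isolated_gaps S = {x. x \<notin> S \<and> 1 \<le> x \<and> x - 1 \<in> S \<and> x + 1 \<in> S}"

definition isolated_gaps_mod :: "nat \<Rightarrow> nat \<Rightarrow> nat set \<Rightarrow> nat set" where
  "isolated_gaps_mod i a S = {s \<in> isolated_gaps S. s mod a = i mod a}"

text \<open>Definitely least solution of a x + b y = 1, characterised (as in the paper)
  by |u| \<le> b/2 and |v| \<le> a/2.\<close>
definition definitely_least_solution :: "int \<Rightarrow> int \<Rightarrow> int \<Rightarrow> int \<Rightarrow> bool" where
  "definitely_least_solution a b u v \<longleftrightarrow>
     a * u + b * v = 1 \<and> 2 * \<bar>u\<bar> \<le> b \<and> 2 * \<bar>v\<bar> \<le> a"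

end

theory Submission
  imports Defs
begin

lemma mem_S:
  assumes e: "int a * u + int b * v = 1" and a: "a > 0"
  shows "x \<in> semigroup2 a b \<longleftrightarrow> ((int x * v) mod int a) * int b \<le> int x"
proof -
  have bv: "int b * v = 1 - int a * u" using e by simp
  show ?thesis
  proof
    assume "x \<in> semigroup2 a b"
    then obtain l1 l2 where x: "x = l1 * a + l2 * b" by (auto simp: semigroup2_def)
    have "int x * v = int l1 * int a * v + int l2 * (int b * v)" by (simp add: x algebra_simps)
    also have "\<dots> = int l2 + int a * (int l1 * v - int l2 * u)" unfolding bv by (simp add: algebra_simps)
    finally have "(int x * v) mod int a = int l2 mod int a" by simp
    also have "\<dots> \<le> int l2" by (simp add: zmod_le_nonneg_dividend)
    finally have "((int x * v) mod int a) * int b \<le> int l2 * int b" by (simp add: mult_right_mono)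
    also have "\<dots> \<le> int x" by (simp add: x)
    finally show "((int x * v) mod int a) * int b \<le> int x" .
  next
    define m where "m = (int x * v) mod int a"
    assume h: "m * int b \<le> int x"
    have m0: "m \<ge> 0" using a by (simp add: m_def)
    have "(m * int b) mod int a = (int x * v * int b) mod int a"
      by (simp add: m_def mod_mult_left_eq)
    also have "int x * v * int b = int x - int a * (int x * u)"
    proof -
      have "int x * v * int b = int x * (int b * v)" by (simp add: algebra_simps)
      also have "\<dots> = int x - int a * (int x * u)" unfolding bv by (simp add: algebra_simps)
      finally show ?thesis .
    qed
    also have "(int x - int a * (int x * u)) mod int a = int x mod int a" by (simp add: mod_eq_dvd_iff)
    finally have "(m * int b) mod int a = int x mod int a" .
    hence "int a dvd int x - m * int b" by (metis mod_eq_dvd_iff)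
    then obtain q where q: "int x - m * int b = int a * q" by blast
    have "int a * q \<ge> 0" using q h by simp
    hence q0: "q \<ge> 0" using a by (simp add: zero_le_mult_iff)
    have "int x = q * int a + m * int b" using q by (simp add: algebra_simps)
    hence "int x = int (nat q * a + nat m * b)" using q0 m0 by simp
    hence "x = nat q * a + nat m * b" by (simp only: of_nat_eq_iff)
    thus "x \<in> semigroup2 a b" by (auto simp: semigroup2_def)
  qed
qed

lemma count:
  fixes A P :: int and n :: nat
  assumes A: "A > 0" and L: "P - A * int n \<ge> 0"
  shows "card {x::nat. P - A * int n \<le> int x \<and> int x < P \<and> int x mod A = P mod A} = n"
proof -
  let ?f = "\<lambda>k::nat. nat (P - int k * A)"
  have eq: "{x::nat. P - A * int n \<le> int x \<and> int x < P \<and> int x mod A = P mod A} = ?f ` {1..n}"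
  proof (intro set_eqI iffI)
    fix x assume "x \<in> {x::nat. P - A * int n \<le> int x \<and> int x < P \<and> int x mod A = P mod A}"
    hence h: "P - A * int n \<le> int x" "int x < P" "int x mod A = P mod A" by auto
    have "A dvd P - int x" using h(3) by (metis mod_eq_dvd_iff)
    then obtain k where k: "P - int x = A * k" by blast
    have "A * k > 0" using k h(2) by simp
    hence k0: "k > 0" using A by (simp add: zero_less_mult_iff)
    have "A * k \<le> A * int n" using k h(1) by linarith
    hence kn: "k \<le> int n" using A by simp
    have "P - int (nat k) * A = int x" using k0 k by (simp add: algebra_simps)
    hence "?f (nat k) = x" by (simp only: nat_int)
    moreover have "nat k \<in> {1..n}" using k0 kn by auto
    ultimately show "x \<in> ?f ` {1..n}" by (metis image_eqI)
  next
    fix x assume "x \<in> ?f ` {1..n}"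
    then obtain k where k: "k \<in> {1..n}" "x = ?f k" by blast
    have kn: "int k * A \<le> int n * A" using k A by simp
    have kp: "int k * A > 0" using k A by simp
    have x: "int x = P - int k * A" using k kn L by (simp add: algebra_simps)
    have "int x mod A = (P + (- int k) * A) mod A" using x by simp
    also have "\<dots> = P mod A" by (rule mod_mult_self1)
    finally have xm: "int x mod A = P mod A" .
    have "P - A * int n \<le> int x" "int x < P" using x kn kp by (simp_all add: algebra_simps)
    thus "x \<in> {x::nat. P - A * int n \<le> int x \<and> int x < P \<and> int x mod A = P mod A}"
      using xm by simp
  qed
  have "inj_on ?f {1..n}"
  proof
    fix k l assume kl: "k \<in> {1..n}" "l \<in> {1..n}" "?f k = ?f l"
    have "int k * A \<le> int n * A" "int l * A \<le> int n * A" using kl A by auto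
    hence "P - int k * A \<ge> 0" "P - int l * A \<ge> 0" using L by (simp_all add: algebra_simps)
    hence "P - int k * A = P - int l * A" using kl(3) by (metis int_nat_eq)
    hence "int k * A = int l * A" by simp
    thus "k = l" using A by simp
  qed
  hence "card (?f ` {1..n}) = n" by (simp add: card_image)
  thus ?thesis using eq by simp
qed

theorem proposition3p11:
  fixes a b :: nat and u v :: int
  assumes "coprime a b" and "1 < a" and "a < b"
    and "definitely_least_solution (int a) (int b) u v"
  shows "\<forall>i \<in> {1..a-1}. isolated_gaps_mod i a (semigroup2 a b) \<noteq> {} \<longrightarrow>
           int (card (isolated_gaps_mod i a (semigroup2 a b))) = \<bar>u\<bar>"
proof (intro ballI impI)
  fix i assume "i \<in> {1..a-1}" and ne: "isolated_gaps_mod i a (semigroup2 a b) \<noteq> {}"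
  define A where "A = int a"
  define B where "B = int b"
  define G where "G = isolated_gaps_mod i a (semigroup2 a b)"
  have e: "A * u + B * v = 1" and hu: "2 * \<bar>u\<bar> \<le> B" and hv: "2 * \<bar>v\<bar> \<le> A"
    using assms(4) by (auto simp: definitely_least_solution_def A_def B_def)
  have A1: "A > 1" and AB: "A < B" using assms(2,3) by (auto simp: A_def B_def)
  define \<mu> where "\<mu> = (int i * v) mod A"
  define P where "P = \<mu> * B"
  have mu0: "0 \<le> \<mu>" "\<mu> < A" using A1 by (auto simp: \<mu>_def)
  have Pmod: "P mod A = int i mod A"
  proof -
    have "P mod A = (int i * v * B) mod A" by (simp add: P_def \<mu>_def mod_mult_left_eq)
    also have "int i * v * B = int i - A * (int i * u)"
    proof -
      have "int i * v * B = int i * (B * v)" by (simp add: algebra_simps)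
      also have "B * v = 1 - A * u" using e by simp
      finally show ?thesis by (simp add: algebra_simps)
    qed
    also have "(int i - A * (int i * u)) mod A = int i mod A" by (simp add: mod_eq_dvd_iff)
    finally show ?thesis .
  qed
  have mem: "\<And>x. x \<in> semigroup2 a b \<longleftrightarrow> ((int x * v) mod A) * B \<le> int x"
    using mem_S[of a u b v] e A1 by (simp add: A_def B_def)
  have char: "x \<in> G \<longleftrightarrow> 1 \<le> x \<and> int x mod A = P mod A \<and> int x < P \<and>
      ((\<mu> + v) mod A) * B \<le> int x + 1 \<and> ((\<mu> - v) mod A) * B \<le> int x - 1" for x :: nat
  proof (cases "int x mod A = int i mod A")
    case True
    have G_iff: "x \<in> G \<longleftrightarrow> x mod a = i mod a \<and> 1 \<le> x \<and> x \<notin> semigroup2 a b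
        \<and> x - 1 \<in> semigroup2 a b \<and> x + 1 \<in> semigroup2 a b"
      by (auto simp: G_def isolated_gaps_mod_def isolated_gaps_def)
    have m0: "(int x * v) mod A = \<mu>"
    proof -
      have "(int x * v) mod A = ((int x mod A) * v) mod A" by (simp add: mod_mult_left_eq)
      also have "\<dots> = ((int i mod A) * v) mod A" using True by simp
      also have "\<dots> = \<mu>" unfolding \<mu>_def by (simp add: mod_mult_left_eq)
      finally show ?thesis .
    qed
    have m1: "(int (x + 1) * v) mod A = (\<mu> + v) mod A"
    proof -
      have "int (x + 1) * v = int x * v + v" by (simp add: distrib_right)
      hence "(int (x + 1) * v) mod A = ((int x * v) mod A + v) mod A" by (simp add: mod_add_left_eq)
      thus ?thesis using m0 by simp
    qed
    have m2: "(int (x - 1) * v) mod A = (\<mu> - v) mod A" if "1 \<le> x"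
    proof -
      have "int (x - 1) * v = int x * v - v" using that by (simp add: of_nat_diff left_diff_distrib)
      hence "(int (x - 1) * v) mod A = ((int x * v) mod A - v) mod A" by (simp add: mod_diff_left_eq)
      thus ?thesis using m0 by simp
    qed
    have xm: "x mod a = i mod a" using True by (simp add: A_def flip: of_nat_mod)
    have s0: "x \<in> semigroup2 a b \<longleftrightarrow> P \<le> int x" using mem[of x] m0 by (simp add: P_def)
    have s1: "x + 1 \<in> semigroup2 a b \<longleftrightarrow> ((\<mu> + v) mod A) * B \<le> int x + 1"
      using mem[of "x + 1"] m1 by (simp add: add.commute)
    have s2: "x - 1 \<in> semigroup2 a b \<longleftrightarrow> ((\<mu> - v) mod A) * B \<le> int x - 1" if "1 \<le> x"
      using mem[of "x - 1"] m2[OF that] that by (simp add: of_nat_diff)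
    show ?thesis
    proof (cases "1 \<le> x")
      case True
      then show ?thesis unfolding G_iff s0 s1 s2[OF True] using xm \<open>int x mod A = int i mod A\<close> Pmod
        by auto
    next
      case False
      then show ?thesis unfolding G_iff by auto
    qed
  next
    case False
    have "x mod a \<noteq> i mod a" using False by (simp add: A_def flip: of_nat_mod)
    then show ?thesis using False Pmod unfolding G_def isolated_gaps_mod_def by auto
  qed
  from ne obtain x0 where x0: "x0 \<in> G" unfolding G_def by blast
  have c0: "1 \<le> x0" "int x0 < P" "((\<mu> + v) mod A) * B \<le> int x0 + 1"
     "((\<mu> - v) mod A) * B \<le> int x0 - 1" using x0[unfolded char] by auto
  have A0: "A > 0" using A1 by simp
  have B2: "B \<ge> 2" using A1 AB by simp
  have dist: "(\<mu> + t) * B = P + t * B" for t by (simp add: P_def distrib_right)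
  have fin: "int (card G) = \<bar>u\<bar>"
    if U0: "U \<ge> 0" and UA: "\<bar>u\<bar> = U" and low: "P - A * U \<ge> 1"
      and cG: "\<And>x. x \<in> G \<longleftrightarrow> P - A * U \<le> int x \<and> int x < P \<and> int x mod A = P mod A" for U
  proof -
    have "G = {x::nat. P - A * int (nat U) \<le> int x \<and> int x < P \<and> int x mod A = P mod A}"
      using cG U0 by auto
    hence "card G = nat U" using count[of A P "nat U"] A0 low U0 by simp
    thus ?thesis using U0 UA by simp
  qed
  have "v \<noteq> 0"
  proof
    assume "v = 0"
    hence "A * u = 1" using e by simp
    thus False using A1 pos_zmult_eq_1_iff[of A u] by simp
  qed
  then consider "v > 0" | "v < 0" by linarith
  then show "int (card G) = \<bar>u\<bar>"
  proof cases
    case 1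
    have "B * v \<ge> B * 1" using 1 B2 by (intro mult_left_mono) auto
    hence "A * u < 0" using e B2 by linarith
    hence u0: "u < 0" using A0 by (simp add: mult_less_0_iff)
    have vB: "v * B = 1 + A * (-u)" using e by (simp add: algebra_simps)
    have AUp: "A * (-u) > 0" using mult_pos_neg[OF A0 u0] by simp
    have AUB: "A * (-u) < A * B" using hu u0 A0 by (intro mult_strict_left_mono) auto
    have AUB2: "2 * (A * (-u)) \<le> A * B" using hu u0 A0 mult_left_mono[of "2 * (-u)" B A] by (simp add: algebra_simps)
    have h1: "\<mu> + v \<ge> A"
    proof (rule ccontr)
      assume "\<not> ?thesis"
      hence "(\<mu> + v) mod A = \<mu> + v" using mu0 1 by (simp add: mod_pos_pos_trivial)
      hence "P + v * B \<le> int x0 + 1" using c0(3) dist[of v] by simp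
      thus False using c0 vB AUp by linarith
    qed
    have m1: "(\<mu> + v) mod A = \<mu> + (v - A)"
    proof -
      have "(\<mu> + v) mod A = (\<mu> + v - A) mod A" by (simp add: mod_eq_dvd_iff)
      also have "\<dots> = \<mu> + v - A" using h1 mu0 hv 1 by (intro mod_pos_pos_trivial) auto
      finally show ?thesis by simp
    qed
    have h2: "\<mu> - v \<ge> 0"
    proof (rule ccontr)
      assume "\<not> ?thesis"
      hence "(\<mu> - v) mod A = \<mu> + (A - v)"
      proof -
        have "(\<mu> - v) mod A = (\<mu> - v + A) mod A" by simp
        also have "\<dots> = \<mu> - v + A" using mu0 1 hv \<open>\<not> \<mu> - v \<ge> 0\<close> by (intro mod_pos_pos_trivial) auto
        finally show ?thesis by simp
      qed
      hence "P + (A - v) * B \<le> int x0 - 1" using c0(4) dist[of "A - v"] by simp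
      moreover have "(A - v) * B = A * B - v * B" by (simp add: left_diff_distrib)
      ultimately show False using c0 vB AUB by linarith
    qed
    have m2: "(\<mu> - v) mod A = \<mu> + (- v)" using h2 mu0 1 by (subst mod_pos_pos_trivial) auto
    have "\<mu> * B \<ge> v * B" using h2 B2 by (intro mult_right_mono) auto
    hence low: "P - A * (-u) \<ge> 1" using vB by (simp add: P_def)
    have E1: "((\<mu> + v) mod A) * B = P + 1 + A * (-u) - A * B"
      unfolding m1 dist using vB by (simp add: left_diff_distrib)
    have E2: "((\<mu> - v) mod A) * B = P - 1 - A * (-u)"
      unfolding m2 dist using vB by simp
    show ?thesis
    proof (rule fin[of "-u"])
      fix x :: nat
      show "x \<in> G \<longleftrightarrow> P - A * - u \<le> int x \<and> int x < P \<and> int x mod A = P mod A"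
        unfolding char E1 E2 using low AUB2 by auto
    qed (use u0 low in auto)
  next
    case 2
    have "B * (-v) \<ge> B * 1" using 2 B2 by (intro mult_left_mono) auto
    hence "A * u > 0" using e B2 by (simp add: algebra_simps)
    hence u0: "u > 0" using A0 by (simp add: zero_less_mult_iff)
    have vB: "v * B = 1 - A * u" using e by (simp add: algebra_simps)
    have AUp: "A * u > 0" using A0 u0 by simp
    have AUB: "A * u < A * B" using hu u0 A0 by (intro mult_strict_left_mono) auto
    have AUB2: "2 * (A * u) \<le> A * B" using hu u0 A0 mult_left_mono[of "2 * u" B A] by (simp add: algebra_simps)
    have h1: "\<mu> + v \<ge> 0"
    proof (rule ccontr)
      assume "\<not> ?thesis"
      hence "(\<mu> + v) mod A = \<mu> + (v + A)"
      proof -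
        have "(\<mu> + v) mod A = (\<mu> + v + A) mod A" by simp
        also have "\<dots> = \<mu> + v + A" using mu0 2 hv \<open>\<not> \<mu> + v \<ge> 0\<close> by (intro mod_pos_pos_trivial) auto
        finally show ?thesis by simp
      qed
      hence "P + (v + A) * B \<le> int x0 + 1" using c0(3) dist[of "v + A"] by simp
      moreover have "(v + A) * B = v * B + A * B" by (simp add: distrib_right)
      ultimately show False using c0 vB AUB by linarith
    qed
    have m1: "(\<mu> + v) mod A = \<mu> + v" using h1 mu0 2 by (intro mod_pos_pos_trivial) auto
    have h2: "\<mu> - v \<ge> A"
    proof (rule ccontr)
      assume "\<not> ?thesis"
      hence "(\<mu> - v) mod A = \<mu> + (- v)" using mu0 2 by (subst mod_pos_pos_trivial) auto
      hence "P + (- v) * B \<le> int x0 - 1" using c0(4) dist[of "- v"] by simp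
      thus False using c0 vB AUp by simp
    qed
    have m2: "(\<mu> - v) mod A = \<mu> + (- v - A)"
    proof -
      have "(\<mu> - v) mod A = (\<mu> - v - A) mod A" by (simp add: mod_eq_dvd_iff)
      also have "\<dots> = \<mu> - v - A" using h2 mu0 hv 2 by (intro mod_pos_pos_trivial) auto
      finally show ?thesis by simp
    qed
    have "\<mu> \<noteq> - v"
    proof
      assume mv: "\<mu> = - v"
      hence "A = - 2 * v" using h2 hv 2 by simp
      hence "v * (B - 2 * u) = 1" using e by (simp add: algebra_simps)
      moreover have "v * (B - 2 * u) \<le> 0" using 2 hu u0 by (intro mult_nonpos_nonneg) auto
      ultimately show False by simp
    qed
    hence "\<mu> \<ge> -v + 1" using h1 by simp
    hence "\<mu> * B \<ge> (-v + 1) * B" using B2 by (intro mult_right_mono) auto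
    moreover have "(-v + 1) * B = - (v * B) + B" by (simp add: algebra_simps)
    ultimately have low: "P - A * u \<ge> 1" using vB B2 unfolding P_def by linarith
    have E1: "((\<mu> + v) mod A) * B = P + 1 - A * u"
      unfolding m1 dist using vB by simp
    have E2: "((\<mu> - v) mod A) * B = P - 1 + A * u - A * B"
      unfolding m2 dist using vB by (simp add: left_diff_distrib)
    show ?thesis
    proof (rule fin[of "u"])
      fix x :: nat
      show "x \<in> G \<longleftrightarrow> P - A * u \<le> int x \<and> int x < P \<and> int x mod A = P mod A"
        unfolding char E1 E2 using low AUB2 by auto
    qed (use u0 low in auto)
  qed
qed

end
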